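(* Let $A = \begin{bmatrix} B & C \\ C^T & D \end{bmatrix}$ be a real symmetric $n\times n$ matrix, where $B$ is $k\times k$ (so $C$ is $k \times (n-k)$ and $D$ is $(n-k)\times(n-k)$). Then the following are equivalent: (a) $\{1,2,\dots,k\}$ is a P-set of $A$; (b) $\operatorname{rank}(A) = \operatorname{rank}(D) + 2k$; (c) $\{x \in \mathbb{R}^k : x^T C \in \operatorname{RS}(D)\} = \{0\}$.
   Context: All matrices are real. $\operatorname{RS}(D)$ denotes the row space of $D$. For an $n\times n$ matrix $A$ and $\alpha \subseteq \{1,\dots,n\}$, $A(\alpha)$ denotes the principal submatrix obtained by deleting the rows and columns indexed by $\alpha$, and $\nu(A)$ denotes the nullity of $A$. A set $\alpha$ is a P-set of $A$ if $\nu(A(\alpha)) = \nu(A) + |\alpha|$. *)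

theory Defs
  imports "Jordan_Normal_Form.DL_Rank_Submatrix" "Jordan_Normal_Form.Matrix_Kernel"
begin

text \<open>Principal submatrix A(alpha): delete the rows and columns indexed by alpha
  (indices are 0-based, i.e. range over {0..<dim_row A}).\<close>
definition principal_del :: "'a mat \<Rightarrow> nat set \<Rightarrow> 'a mat" where
  "principal_del A \<alpha> = submatrix A (- \<alpha>) (- \<alpha>)"

definition nullity :: "'a :: field mat \<Rightarrow> nat" where
  "nullity A = kernel_dim A"

definition P_set :: "'a :: field mat \<Rightarrow> nat set \<Rightarrow> bool" where
  "P_set A \<alpha> \<longleftrightarrow> \<alpha> \<subseteq> {..<dim_row A} \<and>
     nullity (principal_del A \<alpha>) = nullity A + card \<alpha>"

definition mrank :: "real mat \<Rightarrow> nat" where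
  "mrank A = vec_space.rank (dim_row A) A"

definition RS :: "real mat \<Rightarrow> real vec set" where
  "RS D = vec_space.row_space (dim_col D) D"

end

theory Submission
  imports Defs
begin


lemma linear_map_mat:
  fixes M :: "'a::field mat"
  assumes M: "M \<in> carrier_mat r c"
  shows "linear_map class_ring (module_vec TYPE('a) c) (module_vec TYPE('a) r) (\<lambda>v. M *\<^sub>v v)"
    apply (rule linear_map.intro[OF vec_vs vec_vs])
    apply (rule mod_hom.intro)
    using vec_vs unfolding vectorspace_def apply blast
    using vec_vs unfolding vectorspace_def apply blast
    apply (rule mod_hom_axioms.intro)
    using M by (auto simp: LinearCombinations.module_hom_def module_vec_simps mult_add_distrib_mat_vec mult_mat_vec)

lemma rank_nullity_mat:
  fixes M :: "'a::field mat"
  assumes M: "M \<in> carrier_mat r c"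
  shows "vec_space.rank r M + kernel_dim M = c"
proof -
  interpret V: vec_space "TYPE('a)" c .
  interpret W: vec_space "TYPE('a)" r .
  interpret K: kernel r c M by (unfold_locales, rule M)
  interpret L: linear_map class_ring "module_vec TYPE('a) c" "module_vec TYPE('a) r" "\<lambda>v. M *\<^sub>v v"
    by (rule linear_map_mat[OF M])
  note rn = L.rank_nullity[OF V.fin_dim]
  have im: "L.imT = W.span (set (cols M))"
    using W.col_space_eq[OF M] M unfolding W.col_space_def
    by (auto simp: mod_hom.im_def[OF L.mod_hom_axioms] module_vec_simps)
  have ker: "L.kerT = mat_kernel M"
    using M by (auto simp: mod_hom.ker_def[OF L.mod_hom_axioms] module_vec_simps mat_kernel_def)
  have "kernel_dim M = K.dim" by simp
  show ?thesis using rn unfolding im ker W.rank_def V.dim_is_n K.kernel_dim by simp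
qed

lemma kernel_dim_strict_gen:
  fixes X Y :: "'a::field mat"
  assumes X: "X \<in> carrier_mat r1 c" and Y: "Y \<in> carrier_mat r2 c"
    and sub: "mat_kernel X \<subseteq> mat_kernel Y"
    and W: "W \<subseteq> mat_kernel Y" and WX: "W \<inter> mat_kernel X = {}" and cW: "W \<subseteq> {v}"
  shows "kernel_dim X + card W \<le> kernel_dim Y"
proof -
  interpret V: vec_space "TYPE('a)" c .
  interpret KX: kernel r1 c X by (unfold_locales, rule X)
  interpret KY: kernel r2 c Y by (unfold_locales, rule Y)
  obtain b where fb: "finite b" and bb: "KX.basis b" using kernel_basis_exists[OF X] by blast
  have bX: "b \<subseteq> mat_kernel X" and bli: "\<not> KX.lin_dep b" and bsp: "KX.span b = mat_kernel X"
    using bb unfolding KX.Ker.basis_def by auto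
  have dX: "kernel_dim X = card b" using KX.Ker.dim_basis[OF fb bb] by simp
  have bli': "\<not> V.lin_dep b" using bli KX.lindep_same[OF bX] by simp
  have bsp': "V.span b = mat_kernel X" using bsp KX.span_same[OF bX] by simp
  have kc: "mat_kernel Y \<subseteq> carrier_vec c" using mat_kernel_carrier Y by blast
  have kcX: "mat_kernel X \<subseteq> carrier_vec c" using mat_kernel_carrier X by blast
  have fW: "finite W" using cW finite_subset by blast
  have li: "\<not> V.lin_dep (b \<union> W)"
  proof (cases "W = {}")
    case True then show ?thesis using bli' by simp
  next
    case False
    then have Wv: "W = {v}" using cW by blast
    have "v \<notin> V.span b" using Wv WX bsp' by auto
    moreover have "v \<in> carrier_vec c" "v \<notin> b" using Wv W kc WX bX by auto
    ultimately show ?thesis using V.lin_dep_iff_in_span[of b v] bX kcX bli' Wv by auto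
  qed
  obtain bY where fbY: "finite bY" and bbY: "KY.basis bY" using kernel_basis_exists[OF Y] by blast
  have fd: "KY.Ker.fin_dim" using fbY bbY unfolding KY.Ker.fin_dim_def KY.Ker.basis_def by auto
  have bWY: "b \<union> W \<subseteq> mat_kernel Y" using bX sub W by auto
  have "card (b \<union> W) \<le> KY.dim"
    by (rule KY.Ker.li_le_dim(2)[OF fd], use bWY in simp, simp add: KY.lindep_same[OF bWY] li)
  moreover have "card (b \<union> W) = card b + card W"
    by (rule card_Un_disjoint[OF fb fW], use bX WX in auto)
  ultimately show ?thesis using dX by simp
qed

lemma real_dot_self_zero:
  fixes w :: "real vec"
  assumes "w \<in> carrier_vec n" "w \<bullet> w = 0"
  shows "w = 0\<^sub>v n"
proof -
  have "w \<bullet>c w = w \<bullet> w" by (simp add: conjugate_vec_def scalar_prod_def)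
  then show ?thesis using assms conjugate_square_eq_0_vec by metis
qed

lemma mat_vec_zero_r: "(A :: 'a :: comm_ring_1 mat) \<in> carrier_mat n m \<Longrightarrow> A *\<^sub>v 0\<^sub>v m = 0\<^sub>v n"
  by (rule eq_vecI) (auto simp: scalar_prod_def)

lemma kernel_gram:
  fixes M :: "real mat"
  assumes M: "M \<in> carrier_mat r c"
  shows "mat_kernel (transpose_mat M * M) = mat_kernel M"
proof
  have G: "transpose_mat M * M \<in> carrier_mat c c" using M by auto
  show "mat_kernel (transpose_mat M * M) \<subseteq> mat_kernel M"
  proof
    fix x assume x: "x \<in> mat_kernel (transpose_mat M * M)"
    have xc: "x \<in> carrier_vec c" using x G mat_kernelD by blast
    have Mx: "M *\<^sub>v x \<in> carrier_vec r" using M xc by simp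
    have "(transpose_mat M * M) *\<^sub>v x = transpose_mat M *\<^sub>v (M *\<^sub>v x)"
      using M xc by simp
    then have h: "transpose_mat M *\<^sub>v (M *\<^sub>v x) = 0\<^sub>v c"
      using mat_kernelD(2)[OF G x] by simp
    have "(transpose_mat M *\<^sub>v (M *\<^sub>v x)) \<bullet> x = 0" using xc h by simp
    then have "(M *\<^sub>v x) \<bullet> (M *\<^sub>v x) = 0" using transpose_vec_mult_scalar[OF M xc Mx] by simp
    then have "M *\<^sub>v x = 0\<^sub>v r" using real_dot_self_zero[OF Mx] by simp
    then show "x \<in> mat_kernel M" using mat_kernelI[OF M xc] by simp
  qed
  show "mat_kernel M \<subseteq> mat_kernel (transpose_mat M * M)"
  proof
    fix x assume x: "x \<in> mat_kernel M"
    have xc: "x \<in> carrier_vec c" using x M mat_kernelD by blast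
    have "(transpose_mat M * M) *\<^sub>v x = transpose_mat M *\<^sub>v (M *\<^sub>v x)"
      using M xc by simp
    also have "\<dots> = 0\<^sub>v c" using mat_kernelD(2)[OF M x] M mat_vec_zero_r[of "transpose_mat M" c r] by simp
    finally show "x \<in> mat_kernel (transpose_mat M * M)" using mat_kernelI[OF G xc] by simp
  qed
qed

lemma rank_span_mono:
  fixes M N :: "'a::field mat"
  assumes M: "M \<in> carrier_mat r c" and N: "N \<in> carrier_mat r c'"
    and sub0: "\<And>j. j < c \<Longrightarrow> \<exists>x\<in>carrier_vec c'. col M j = N *\<^sub>v x"
  shows "vec_space.rank r M \<le> vec_space.rank r N"
proof -
  interpret V: vec_space "TYPE('a)" r .
  have cN: "set (cols N) \<subseteq> carrier_vec r" using N cols_dim by blast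
  have cM: "set (cols M) \<subseteq> carrier_vec r" using M cols_dim by blast
  have sub: "set (cols M) \<subseteq> V.span (set (cols N))"
  proof
    fix v assume "v \<in> set (cols M)"
    then obtain j where j: "j < c" "v = col M j" using M by (auto simp: in_set_conv_nth)
    then obtain x where x: "x \<in> carrier_vec c'" "v = N *\<^sub>v x" using sub0 by blast
    have "N *\<^sub>v x \<in> V.col_space N" using V.col_space_eq[OF N] N x by auto
    then show "v \<in> V.span (set (cols N))" using x unfolding V.col_space_def by simp
  qed
  have sT: "VectorSpace.subspace class_ring (V.span (set (cols N))) V.V" using V.span_is_subspace cN by auto
  have sS: "VectorSpace.subspace class_ring (V.span (set (cols M))) V.V" using V.span_is_subspace cM by auto
  have incl: "V.span (set (cols M)) \<subseteq> V.span (set (cols N))"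
    using V.span_is_subset[OF sub V.span_is_submodule[OF cN]] .
  have ss: "VectorSpace.subspace class_ring (V.span (set (cols M))) (V.vs (V.span (set (cols N))))"
    using V.nested_subspaces[OF sT sS incl] .
  have fd: "vectorspace.fin_dim class_ring (V.vs (V.span (set (cols N))))"
    using V.fin_dim_span_cols[OF N] .
  show ?thesis unfolding V.rank_def
    using vectorspace.subspace_dim[OF V.subspace_is_vs[OF sT] ss fd] V.fin_dim_span_cols[OF M] by simp
qed

lemma kernel_dim_mono:
  fixes X Y :: "'a::field mat"
  assumes X: "X \<in> carrier_mat r1 c" and Y: "Y \<in> carrier_mat r2 c"
    and sub: "mat_kernel X \<subseteq> mat_kernel Y"
  shows "kernel_dim X \<le> kernel_dim Y"
  using kernel_dim_strict_gen[OF X Y sub, of "{}" "0\<^sub>v c"] by simp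

lemma kernel_dim_strict:
  fixes X Y :: "'a::field mat"
  assumes X: "X \<in> carrier_mat r1 c" and Y: "Y \<in> carrier_mat r2 c"
    and sub: "mat_kernel X \<subseteq> mat_kernel Y"
    and v: "v \<in> mat_kernel Y" "v \<notin> mat_kernel X"
  shows "kernel_dim X + 1 \<le> kernel_dim Y"
  using kernel_dim_strict_gen[OF X Y sub, of "{v}" v] v by simp

lemma kernel_dim_eq:
  fixes X Y :: "'a::field mat"
  assumes X: "X \<in> carrier_mat r1 c" and Y: "Y \<in> carrier_mat r2 c"
    and eq: "mat_kernel X = mat_kernel Y"
  shows "kernel_dim X = kernel_dim Y"
  using kernel_dim_mono[OF X Y] kernel_dim_mono[OF Y X] eq by (simp add: antisym)

lemma rank_transpose_le:
  fixes M :: "real mat"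
  assumes M: "M \<in> carrier_mat r c"
  shows "vec_space.rank r M \<le> vec_space.rank c (transpose_mat M)"
proof -
  have Mt: "transpose_mat M \<in> carrier_mat c r" using M by simp
  have G: "transpose_mat M * M \<in> carrier_mat c c" using M by simp
  have "vec_space.rank r M + kernel_dim M = c" by (rule rank_nullity_mat[OF M])
  moreover have "vec_space.rank c (transpose_mat M * M) + kernel_dim (transpose_mat M * M) = c"
    by (rule rank_nullity_mat[OF G])
  moreover have "kernel_dim (transpose_mat M * M) = kernel_dim M"
    by (rule kernel_dim_eq[OF G M kernel_gram[OF M]])
  moreover have "vec_space.rank c (transpose_mat M * M) \<le> vec_space.rank c (transpose_mat M)"
  proof (rule rank_span_mono[OF G Mt])
    fix j assume j: "j < c"
    show "\<exists>x\<in>carrier_vec r. col (transpose_mat M * M) j = transpose_mat M *\<^sub>v x"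
      by (rule bexI[of _ "col M j"], use col_mult2[OF Mt M j] M j in auto)
  qed
  ultimately show ?thesis by linarith
qed

lemma rank_transpose:
  fixes M :: "real mat"
  assumes M: "M \<in> carrier_mat r c"
  shows "vec_space.rank c (transpose_mat M) = vec_space.rank r M"
  using rank_transpose_le[OF M] rank_transpose_le[of "transpose_mat M" c r] M
  by (simp add: antisym)



lemma append_vec_empty: "y \<in> carrier_vec m \<Longrightarrow> w \<in> carrier_vec 0 \<Longrightarrow> y @\<^sub>v w = y"
  by (rule eq_vecI) auto

lemma pick_compl_interval: "pick (- {0..<k}) i = k + i"
proof -
  have "k + i \<in> - {0..<k}" by auto
  moreover have "{a \<in> - {0..<k}. a < k + i} = {k..<k+i}" by auto
  ultimately show ?thesis using pick_card_in_set[of "k+i" "- {0..<k}"] by simp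
qed

lemma principal_del_block:
  assumes A: "A \<in> carrier_mat n n" and kn: "k \<le> n"
  shows "principal_del A {0..<k} = mat (n-k) (n-k) (\<lambda>(i,j). A $$ (k+i, k+j))"
proof -
  have c0: "{i. i < n \<and> \<not> i < k} = {k..<n}" by auto
  have c: "card {i. i < n \<and> \<not> i < k} = n - k" unfolding c0 by simp
  show ?thesis unfolding principal_del_def submatrix_def using A
    by (simp add: c pick_compl_interval)
qed

lemma zero_vec_append: "0\<^sub>v (k + m) = (0\<^sub>v k @\<^sub>v 0\<^sub>v m :: 'a::zero vec)"
  by (rule eq_vecI) auto

lemma zero_mat_mult_vec_any: "v \<in> carrier_vec c \<Longrightarrow> (0\<^sub>m r c :: 'a::comm_ring_1 mat) *\<^sub>v v = 0\<^sub>v r"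
  by (rule eq_vecI) (auto simp: scalar_prod_def)

lemma vec_split_ex: "v \<in> carrier_vec (k + m) \<Longrightarrow> \<exists>x\<in>carrier_vec k. \<exists>y\<in>carrier_vec m. v = x @\<^sub>v y"
  by (rule bexI[of _ "vec_first v k"], rule bexI[of _ "vec_last v m"], auto)

lemma vec_add_eq_0:
  fixes a b :: "'a::ab_group_add vec"
  assumes a: "a \<in> carrier_vec n" and b: "b \<in> carrier_vec n" and s: "a + b = 0\<^sub>v n"
  shows "a = - b"
proof (rule eq_vecI)
  fix i assume i: "i < dim_vec (- b)"
  then have "(a + b) $ i = 0" using s b by simp
  then show "a $ i = (- b) $ i" using a b i by (simp add: eq_neg_iff_add_eq_0)
qed (use a b in auto)

lemma mult_mat_vec_uminus_r:
  fixes D :: "'a::comm_ring_1 mat"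
  assumes D: "D \<in> carrier_mat r c" and y: "y \<in> carrier_vec c"
  shows "D *\<^sub>v (- y) = - (D *\<^sub>v y)"
  by (rule eq_vecI, use D y in auto)

theorem theorem2p2:
  fixes A B C D :: "real mat" and n k :: nat
  assumes "k \<le> n"
    and "B \<in> carrier_mat k k" and "C \<in> carrier_mat k (n - k)"
    and "D \<in> carrier_mat (n - k) (n - k)"
    and "A = four_block_mat B C (transpose_mat C) D"
    and "transpose_mat A = A"
  shows "(P_set A {0..<k} \<longleftrightarrow> mrank A = mrank D + 2 * k)
       \<and> (mrank A = mrank D + 2 * k \<longleftrightarrow>
            {x \<in> carrier_vec k. transpose_mat C *\<^sub>v x \<in> RS D} = {0\<^sub>v k})"
proof -
  note kn = assms(1) and Bc = assms(2) and Cc = assms(3) and Dc = assms(4)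
    and Adef = assms(5) and Asym = assms(6)
  define m where "m = n - k"
  have nkm: "n = k + m" using kn m_def by simp
  have Cc': "C \<in> carrier_mat k m" using Cc m_def by simp
  have Dc': "D \<in> carrier_mat m m" using Dc m_def by simp
  have CTc: "transpose_mat C \<in> carrier_mat m k" using Cc' by simp
  have Ac: "A \<in> carrier_mat n n" using Adef Bc Cc' Dc' nkm by simp
  have Aent: "\<And>i j. i < m \<Longrightarrow> j < m \<Longrightarrow> A $$ (k+i, k+j) = D $$ (i,j)"
    using Adef Bc Cc' Dc' by simp
  have Asym': "\<And>i j. i < n \<Longrightarrow> j < n \<Longrightarrow> A $$ (i,j) = A $$ (j,i)"
  proof -
    fix i j assume "i < n" "j < n"
    then have "transpose_mat A $$ (i,j) = A $$ (j,i)" using Ac by simp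
    then show "A $$ (i,j) = A $$ (j,i)" using Asym by simp
  qed
  have Dsym: "transpose_mat D = D"
  proof (rule eq_matI)
    fix i j assume "i < dim_row D" "j < dim_col D"
    then have ij: "i < m" "j < m" using Dc' by auto
    then show "transpose_mat D $$ (i, j) = D $$ (i, j)"
      using Aent[of i j] Aent[of j i] Asym'[of "k+i" "k+j"] Dc' nkm by simp
  qed (use Dc' in auto)
  have rnA: "mrank A + kernel_dim A = n"
    unfolding mrank_def using rank_nullity_mat[OF Ac] Ac by simp
  have rnD: "mrank D + kernel_dim D = m"
    unfolding mrank_def using rank_nullity_mat[OF Dc'] Dc' by simp
  have pd: "principal_del A {0..<k} = D"
    unfolding principal_del_block[OF Ac kn]
    by (rule eq_matI, use Aent Dc' m_def in auto)
  have part1: "P_set A {0..<k} \<longleftrightarrow> mrank A = mrank D + 2 * k"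
    unfolding P_set_def nullity_def pd using Ac kn rnA rnD nkm by auto
  define M where "M = four_block_mat (transpose_mat C) D (0\<^sub>m 0 k) (0\<^sub>m 0 m)"
  have Mc: "M \<in> carrier_mat m n" unfolding M_def
    using four_block_carrier_mat[OF CTc zero_carrier_mat[of 0 m]] nkm by simp
  define Mt where "Mt = transpose_mat M"
  have Mtc: "Mt \<in> carrier_mat n m" unfolding Mt_def using Mc by simp
  have Mt_eq: "Mt = four_block_mat C (0\<^sub>m k 0) D (0\<^sub>m m 0)"
    unfolding Mt_def M_def
    by (subst transpose_four_block_mat[OF CTc Dc' zero_carrier_mat zero_carrier_mat], use Dsym in simp)
  have Mxy: "\<And>(x::real vec) (y::real vec). x \<in> carrier_vec k \<Longrightarrow> y \<in> carrier_vec m \<Longrightarrow>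
     M *\<^sub>v (x @\<^sub>v y) = transpose_mat C *\<^sub>v x + D *\<^sub>v y"
  proof -
    fix x y :: "real vec" assume x: "x \<in> carrier_vec k" and y: "y \<in> carrier_vec m"
    have "M *\<^sub>v (x @\<^sub>v y) = (transpose_mat C *\<^sub>v x + D *\<^sub>v y) @\<^sub>v (0\<^sub>m 0 k *\<^sub>v x + 0\<^sub>m 0 m *\<^sub>v y)"
      unfolding M_def by (rule four_block_mat_mult_vec[OF CTc Dc' _ _ x y], auto)
    also have "\<dots> = transpose_mat C *\<^sub>v x + D *\<^sub>v y"
      by (rule append_vec_empty[of _ m], insert CTc Dc' x y,
          auto intro!: add_carrier_vec mult_mat_vec_carrier zero_carrier_mat)
    finally show "M *\<^sub>v (x @\<^sub>v y) = transpose_mat C *\<^sub>v x + D *\<^sub>v y" .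
  qed
  have Mty: "\<And>(y::real vec). y \<in> carrier_vec m \<Longrightarrow> Mt *\<^sub>v y = (C *\<^sub>v y) @\<^sub>v (D *\<^sub>v y)"
  proof -
    fix y :: "real vec" assume y: "y \<in> carrier_vec m"
    have e: "y = y @\<^sub>v 0\<^sub>v 0" by (rule append_vec_empty[symmetric], use y in auto)
    have "Mt *\<^sub>v y = Mt *\<^sub>v (y @\<^sub>v 0\<^sub>v 0)" using e by simp
    also have "\<dots> = (C *\<^sub>v y + 0\<^sub>m k 0 *\<^sub>v 0\<^sub>v 0) @\<^sub>v (D *\<^sub>v y + 0\<^sub>m m 0 *\<^sub>v 0\<^sub>v 0)"
      unfolding Mt_eq by (rule four_block_mat_mult_vec[OF Cc' _ Dc' _ y], auto)
    also have "\<dots> = (C *\<^sub>v y) @\<^sub>v (D *\<^sub>v y)" using Cc' Dc' y by (simp add: zero_mat_mult_vec_any)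
    finally show "Mt *\<^sub>v y = (C *\<^sub>v y) @\<^sub>v (D *\<^sub>v y)" .
  qed
  have Axy: "\<And>(x::real vec) (y::real vec). x \<in> carrier_vec k \<Longrightarrow> y \<in> carrier_vec m \<Longrightarrow>
     A *\<^sub>v (x @\<^sub>v y) = (B *\<^sub>v x + C *\<^sub>v y) @\<^sub>v (transpose_mat C *\<^sub>v x + D *\<^sub>v y)"
    unfolding Adef by (rule four_block_mat_mult_vec[OF Bc Cc' CTc Dc'])
  have A0y: "\<And>(y::real vec). y \<in> carrier_vec m \<Longrightarrow> A *\<^sub>v (0\<^sub>v k @\<^sub>v y) = Mt *\<^sub>v y"
    using Axy Mty Bc Cc' CTc Dc' by (simp add: mat_vec_zero_r)

  define G where "G = M * Mt"
  have Gc: "G \<in> carrier_mat m m" unfolding G_def using Mc Mtc by simp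
  have kerG: "mat_kernel G = mat_kernel Mt"
    using kernel_gram[OF Mtc] unfolding G_def Mt_def by simp
  define P where "P = four_block_mat (1\<^sub>m k) (0\<^sub>m k m) (0\<^sub>m m k) G"
  have Pc: "P \<in> carrier_mat n n" unfolding P_def using Gc nkm by simp
  define Q where "Q = four_block_mat (1\<^sub>m k) (0\<^sub>m k m) (0\<^sub>m m k) D"
  have Qc: "Q \<in> carrier_mat n n" unfolding Q_def using Dc' nkm by simp
  have kdP: "kernel_dim P = kernel_dim G"
  proof -
    have "kernel.dim (k + m) P = kernel.dim k (1\<^sub>m k :: real mat) + kernel.dim m G"
      by (rule kernel_four_block_0_mat[OF P_def one_carrier_mat Gc])
    then show ?thesis unfolding kernel_dim_def using kernel_one_mat(1)[of k, where ?'a=real] Pc Gc nkm by simp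
  qed
  have kdQ: "kernel_dim Q = kernel_dim D"
  proof -
    have "kernel.dim (k + m) Q = kernel.dim k (1\<^sub>m k :: real mat) + kernel.dim m D"
      by (rule kernel_four_block_0_mat[OF Q_def one_carrier_mat Dc'])
    then show ?thesis unfolding kernel_dim_def using kernel_one_mat(1)[of k, where ?'a=real] Qc Dc' nkm by simp
  qed
  have z: "0\<^sub>v n = 0\<^sub>v k @\<^sub>v (0\<^sub>v m :: real vec)" using nkm zero_vec_append by simp
  have xyc: "\<And>(x::real vec) (y::real vec). x \<in> carrier_vec k \<Longrightarrow> y \<in> carrier_vec m \<Longrightarrow> x @\<^sub>v y \<in> carrier_vec n"
    using nkm by simp
  have kerP: "\<And>(x::real vec) (y::real vec). x \<in> carrier_vec k \<Longrightarrow> y \<in> carrier_vec m \<Longrightarrow>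
      (x @\<^sub>v y \<in> mat_kernel P \<longleftrightarrow> x = 0\<^sub>v k \<and> y \<in> mat_kernel Mt)"
  proof -
    fix x y :: "real vec" assume x: "x \<in> carrier_vec k" and y: "y \<in> carrier_vec m"
    have "P *\<^sub>v (x @\<^sub>v y) = (1\<^sub>m k *\<^sub>v x) @\<^sub>v (G *\<^sub>v y)"
      unfolding P_def by (rule mult_mat_vec_split[OF one_carrier_mat Gc x y])
    then have e: "P *\<^sub>v (x @\<^sub>v y) = x @\<^sub>v (G *\<^sub>v y)" using x by simp
    show "x @\<^sub>v y \<in> mat_kernel P \<longleftrightarrow> x = 0\<^sub>v k \<and> y \<in> mat_kernel Mt"
      unfolding mat_kernel[OF Pc] kerG[symmetric] mat_kernel[OF Gc] using e z x y xyc by simp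
  qed
  have kerQ: "\<And>(x::real vec) (y::real vec). x \<in> carrier_vec k \<Longrightarrow> y \<in> carrier_vec m \<Longrightarrow>
      (x @\<^sub>v y \<in> mat_kernel Q \<longleftrightarrow> x = 0\<^sub>v k \<and> D *\<^sub>v y = 0\<^sub>v m)"
  proof -
    fix x y :: "real vec" assume x: "x \<in> carrier_vec k" and y: "y \<in> carrier_vec m"
    have "Q *\<^sub>v (x @\<^sub>v y) = (1\<^sub>m k *\<^sub>v x) @\<^sub>v (D *\<^sub>v y)"
      unfolding Q_def by (rule mult_mat_vec_split[OF one_carrier_mat Dc' x y])
    then have e: "Q *\<^sub>v (x @\<^sub>v y) = x @\<^sub>v (D *\<^sub>v y)" using x by simp
    show "x @\<^sub>v y \<in> mat_kernel Q \<longleftrightarrow> x = 0\<^sub>v k \<and> D *\<^sub>v y = 0\<^sub>v m"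
      unfolding mat_kernel[OF Qc] using e z x y xyc Dc' by simp
  qed
  have kerA: "\<And>(x::real vec) (y::real vec). x \<in> carrier_vec k \<Longrightarrow> y \<in> carrier_vec m \<Longrightarrow>
      (x @\<^sub>v y \<in> mat_kernel A \<longleftrightarrow> B *\<^sub>v x + C *\<^sub>v y = 0\<^sub>v k \<and> transpose_mat C *\<^sub>v x + D *\<^sub>v y = 0\<^sub>v m)"
  proof -
    fix x y :: "real vec" assume x: "x \<in> carrier_vec k" and y: "y \<in> carrier_vec m"
    have c1: "B *\<^sub>v x + C *\<^sub>v y \<in> carrier_vec k" using Bc Cc' x y by simp
    show "?thesis x y"
      unfolding mat_kernel[OF Ac] using Axy[OF x y] z x y xyc append_vec_eq[OF c1] by simp
  qed
  have kerM: "\<And>(x::real vec) (y::real vec). x \<in> carrier_vec k \<Longrightarrow> y \<in> carrier_vec m \<Longrightarrow>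
      (x @\<^sub>v y \<in> mat_kernel M \<longleftrightarrow> transpose_mat C *\<^sub>v x + D *\<^sub>v y = 0\<^sub>v m)"
    unfolding mat_kernel[OF Mc] using Mxy xyc by simp
  have kerA_c: "mat_kernel A \<subseteq> carrier_vec n" using mat_kernel_carrier Ac by blast
  have kerM_c: "mat_kernel M \<subseteq> carrier_vec n" using mat_kernel_carrier Mc by blast
  have kerP_c: "mat_kernel P \<subseteq> carrier_vec n" using mat_kernel_carrier Pc by blast
  have kerQ_c: "mat_kernel Q \<subseteq> carrier_vec n" using mat_kernel_carrier Qc by blast
  have split: "\<And>(v::real vec). v \<in> carrier_vec n \<Longrightarrow> \<exists>x\<in>carrier_vec k. \<exists>y\<in>carrier_vec m. v = x @\<^sub>v y"
    using vec_split_ex nkm by blast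
  have PA: "mat_kernel P \<subseteq> mat_kernel A"
  proof
    fix v assume v: "v \<in> mat_kernel P"
    then obtain x y where x: "x \<in> carrier_vec k" and y: "y \<in> carrier_vec m" and vxy: "v = x @\<^sub>v y"
      using split kerP_c by blast
    have x0: "x = 0\<^sub>v k" and yk: "y \<in> mat_kernel Mt" using kerP[OF x y] v vxy by auto
    have "A *\<^sub>v v = 0\<^sub>v n" using A0y[OF y] vxy x0 mat_kernelD(2)[OF Mtc yk] by simp
    then show "v \<in> mat_kernel A" using mat_kernelI[OF Ac] v kerP_c by blast
  qed
  have QM: "mat_kernel Q \<subseteq> mat_kernel M"
  proof
    fix v assume v: "v \<in> mat_kernel Q"
    then obtain x y where x: "x \<in> carrier_vec k" and y: "y \<in> carrier_vec m" and vxy: "v = x @\<^sub>v y"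
      using split kerQ_c by blast
    have x0: "x = 0\<^sub>v k" and yk: "D *\<^sub>v y = 0\<^sub>v m" using kerQ[OF x y] v vxy by auto
    have "transpose_mat C *\<^sub>v x + D *\<^sub>v y = 0\<^sub>v m" using x0 yk CTc by (simp add: mat_vec_zero_r)
    then show "v \<in> mat_kernel M" using kerM[OF x y] vxy by simp
  qed
  have rnM: "vec_space.rank m M + kernel_dim M = n" by (rule rank_nullity_mat[OF Mc])
  have rnMt: "vec_space.rank n Mt + kernel_dim Mt = m" by (rule rank_nullity_mat[OF Mtc])
  have rkT: "vec_space.rank n Mt = vec_space.rank m M" unfolding Mt_def by (rule rank_transpose[OF Mc])
  have kdG: "kernel_dim G = kernel_dim Mt" by (rule kernel_dim_eq[OF Gc Mtc kerG])
  have kPA: "kernel_dim P \<le> kernel_dim A" by (rule kernel_dim_mono[OF Pc Ac PA])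
  have kQM: "kernel_dim Q \<le> kernel_dim M" by (rule kernel_dim_mono[OF Qc Mc QM])
  interpret Vm: vec_space "TYPE(real)" m .
  have RSc: "\<And>(w::real vec). w \<in> RS D \<longleftrightarrow> w \<in> carrier_vec m \<and> (\<exists>z\<in>carrier_vec m. D *\<^sub>v z = w)"
    unfolding RS_def using Vm.row_space_eq[OF Dc'] Dc' Dsym by auto
  have S0: "0\<^sub>v k \<in> {x \<in> carrier_vec k. transpose_mat C *\<^sub>v x \<in> RS D}"
  proof -
    have "transpose_mat C *\<^sub>v 0\<^sub>v k = 0\<^sub>v m" using CTc by (simp add: mat_vec_zero_r)
    moreover have "0\<^sub>v m \<in> RS D" using RSc[of "0\<^sub>v m"] Dc' mat_vec_zero_r[OF Dc'] by auto
    ultimately show ?thesis by simp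
  qed
  have Seq: "({x \<in> carrier_vec k. transpose_mat C *\<^sub>v x \<in> RS D} = {0\<^sub>v k}) \<longleftrightarrow>
      (\<forall>x\<in>carrier_vec k. transpose_mat C *\<^sub>v x \<in> RS D \<longrightarrow> x = 0\<^sub>v k)"
    using S0 by blast
  have key: "\<And>(x::real vec) (y::real vec). x \<in> carrier_vec k \<Longrightarrow> y \<in> carrier_vec m \<Longrightarrow>
      transpose_mat C *\<^sub>v x + D *\<^sub>v y = 0\<^sub>v m \<Longrightarrow> transpose_mat C *\<^sub>v x \<in> RS D"
  proof -
    fix x y :: "real vec" assume x: "x \<in> carrier_vec k" and y: "y \<in> carrier_vec m"
      and s: "transpose_mat C *\<^sub>v x + D *\<^sub>v y = 0\<^sub>v m"
    have "transpose_mat C *\<^sub>v x = - (D *\<^sub>v y)"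
      by (rule vec_add_eq_0[OF _ _ s], use CTc Dc' x y in auto)
    also have "\<dots> = D *\<^sub>v (- y)" using mult_mat_vec_uminus_r[OF Dc' y] by simp
    finally show "transpose_mat C *\<^sub>v x \<in> RS D" using RSc CTc Dc' x y uminus_carrier_vec[of y m] by auto
  qed
  have part2: "mrank A = mrank D + 2 * k \<longleftrightarrow>
            {x \<in> carrier_vec k. transpose_mat C *\<^sub>v x \<in> RS D} = {0\<^sub>v k}"
  proof (cases "\<forall>x\<in>carrier_vec k. transpose_mat C *\<^sub>v x \<in> RS D \<longrightarrow> x = 0\<^sub>v k")
    case True
    have AP: "mat_kernel A \<subseteq> mat_kernel P"
    proof
      fix v assume v: "v \<in> mat_kernel A"
      then obtain x y where x: "x \<in> carrier_vec k" and y: "y \<in> carrier_vec m" and vxy: "v = x @\<^sub>v y"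
        using split kerA_c by blast
      have s: "transpose_mat C *\<^sub>v x + D *\<^sub>v y = 0\<^sub>v m" using kerA[OF x y] v vxy by auto
      have x0: "x = 0\<^sub>v k" using True key[OF x y s] x by blast
      have "Mt *\<^sub>v y = 0\<^sub>v n" using A0y[OF y] mat_kernelD(2)[OF Ac v] vxy x0 by simp
      then have "y \<in> mat_kernel Mt" using mat_kernelI[OF Mtc y] by simp
      then show "v \<in> mat_kernel P" using kerP[OF x y] x0 vxy by simp
    qed
    have MQ: "mat_kernel M \<subseteq> mat_kernel Q"
    proof
      fix v assume v: "v \<in> mat_kernel M"
      then obtain x y where x: "x \<in> carrier_vec k" and y: "y \<in> carrier_vec m" and vxy: "v = x @\<^sub>v y"
        using split kerM_c by blast
      have s: "transpose_mat C *\<^sub>v x + D *\<^sub>v y = 0\<^sub>v m" using kerM[OF x y] v vxy by auto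
      have x0: "x = 0\<^sub>v k" using True key[OF x y s] x by blast
      have "D *\<^sub>v y = 0\<^sub>v m" using s x0 CTc Dc' y by (simp add: mat_vec_zero_r)
      then show "v \<in> mat_kernel Q" using kerQ[OF x y] x0 vxy by simp
    qed
    have e1: "kernel_dim A = kernel_dim P" using kPA kernel_dim_mono[OF Ac Pc AP] by simp
    have e2: "kernel_dim M = kernel_dim Q" using kQM kernel_dim_mono[OF Mc Qc MQ] by simp
    have "mrank A = mrank D + 2 * k"
      using e1 e2 kdP kdQ kdG rnA rnD rnM rnMt rkT nkm by linarith
    then show ?thesis using True Seq by simp
  next
    case False
    then obtain x where x: "x \<in> carrier_vec k" and xr: "transpose_mat C *\<^sub>v x \<in> RS D" and x0: "x \<noteq> 0\<^sub>v k"
      by blast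
    obtain z where z: "z \<in> carrier_vec m" and Dz: "D *\<^sub>v z = transpose_mat C *\<^sub>v x"
      using RSc xr by blast
    have mz: "- z \<in> carrier_vec m" using z by simp
    have "transpose_mat C *\<^sub>v x + D *\<^sub>v (- z) = 0\<^sub>v m"
      using Dz mult_mat_vec_uminus_r[OF Dc' z] Dc' z mult_mat_vec_carrier[OF CTc x] by simp
    then have vM: "x @\<^sub>v (- z) \<in> mat_kernel M" using kerM[OF x mz] by simp
    have vQ: "x @\<^sub>v (- z) \<notin> mat_kernel Q" using kerQ[OF x mz] x0 by simp
    have "kernel_dim Q + 1 \<le> kernel_dim M" by (rule kernel_dim_strict[OF Qc Mc QM vM vQ])
    then have "mrank A \<noteq> mrank D + 2 * k"
      using kPA kdP kdQ kdG rnA rnD rnM rnMt rkT nkm by linarith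
    then show ?thesis using False Seq by simp
  qed
  show ?thesis using part1 part2 by simp
qed
end
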